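(* Let $G$ be a graph. Then $\mathrm{diam}(G)\le 3$ if and only if every independent set of $G$ is a general position set of $G$.
   Context: All graphs are finite, simple and connected; $\mathrm{diam}(G)$ is the maximum distance between two vertices. A set $S$ of vertices is a general position set if no three vertices of $S$ lie on a common geodesic (shortest path) of $G$. *)

theory Defs
  imports Main
begin

definition simple_graph :: "'a set \<Rightarrow> ('a \<Rightarrow> 'a \<Rightarrow> bool) \<Rightarrow> bool" where
  "simple_graph V E \<longleftrightarrow> finite V \<and> V \<noteq> {} \<and>
     (\<forall>x y. E x y \<longrightarrow> x \<in> V \<and> y \<in> V) \<and>
     (\<forall>x y. E x y \<longrightarrow> E y x) \<and> (\<forall>x. \<not> E x x)"

definition is_walk :: "'a set \<Rightarrow> ('a \<Rightarrow> 'a \<Rightarrow> bool) \<Rightarrow> 'a list \<Rightarrow> bool" where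
  "is_walk V E p \<longleftrightarrow> p \<noteq> [] \<and> set p \<subseteq> V \<and>
     (\<forall>i. Suc i < length p \<longrightarrow> E (p ! i) (p ! Suc i))"

definition graph_connected :: "'a set \<Rightarrow> ('a \<Rightarrow> 'a \<Rightarrow> bool) \<Rightarrow> bool" where
  "graph_connected V E \<longleftrightarrow>
     (\<forall>u\<in>V. \<forall>v\<in>V. \<exists>p. is_walk V E p \<and> hd p = u \<and> last p = v)"

definition gdist :: "'a set \<Rightarrow> ('a \<Rightarrow> 'a \<Rightarrow> bool) \<Rightarrow> 'a \<Rightarrow> 'a \<Rightarrow> nat" where
  "gdist V E u v = (LEAST n. \<exists>p. is_walk V E p \<and> hd p = u \<and> last p = v \<and> length p = Suc n)"

definition diam :: "'a set \<Rightarrow> ('a \<Rightarrow> 'a \<Rightarrow> bool) \<Rightarrow> nat" where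
  "diam V E = Max {gdist V E u v | u v. u \<in> V \<and> v \<in> V}"

definition is_geodesic :: "'a set \<Rightarrow> ('a \<Rightarrow> 'a \<Rightarrow> bool) \<Rightarrow> 'a list \<Rightarrow> bool" where
  "is_geodesic V E p \<longleftrightarrow> is_walk V E p \<and> length p = Suc (gdist V E (hd p) (last p))"

definition independent_set :: "'a set \<Rightarrow> ('a \<Rightarrow> 'a \<Rightarrow> bool) \<Rightarrow> 'a set \<Rightarrow> bool" where
  "independent_set V E S \<longleftrightarrow> S \<subseteq> V \<and> (\<forall>x\<in>S. \<forall>y\<in>S. \<not> E x y)"

definition general_position_set :: "'a set \<Rightarrow> ('a \<Rightarrow> 'a \<Rightarrow> bool) \<Rightarrow> 'a set \<Rightarrow> bool" where
  "general_position_set V E S \<longleftrightarrow> S \<subseteq> V \<and>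
     (\<forall>x\<in>S. \<forall>y\<in>S. \<forall>z\<in>S. x \<noteq> y \<and> y \<noteq> z \<and> x \<noteq> z \<longrightarrow>
        \<not> (\<exists>p. is_geodesic V E p \<and> {x, y, z} \<subseteq> set p))"

end

theory Submission
  imports Defs
begin

lemma walk_append:
  assumes "is_walk V E xs" "is_walk V E ys" "E (last xs) (hd ys)"
  shows "is_walk V E (xs @ ys)"
  unfolding is_walk_def
proof (intro conjI allI impI)
  show "xs @ ys \<noteq> []" using assms(1) by (simp add: is_walk_def)
  show "set (xs @ ys) \<subseteq> V" using assms(1,2) by (simp add: is_walk_def)
  fix i assume i: "Suc i < length (xs @ ys)"
  have nx: "xs \<noteq> []" and ny: "ys \<noteq> []" using assms by (auto simp: is_walk_def)
  consider "Suc i < length xs" | "Suc i = length xs" | "Suc i > length xs" by linarith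
  then show "E ((xs @ ys) ! i) ((xs @ ys) ! Suc i)"
  proof cases
    case 1 then show ?thesis using assms(1) by (simp add: is_walk_def nth_append)
  next
    case 2
    then have "i = length xs - 1" by simp
    then show ?thesis using assms(3) nx ny 2
      by (simp add: nth_append last_conv_nth hd_conv_nth)
  next
    case 3
    then have "Suc (i - length xs) < length ys" "Suc i - length xs = Suc (i - length xs)" using i by auto
    then show ?thesis using assms(2) 3 unfolding is_walk_def by (auto simp: nth_append)
  qed
qed

lemma walk_take: "is_walk V E p \<Longrightarrow> 0 < k \<Longrightarrow> is_walk V E (take k p)"
  unfolding is_walk_def by (auto dest: in_set_takeD)

lemma walk_drop: "is_walk V E p \<Longrightarrow> k < length p \<Longrightarrow> is_walk V E (drop k p)"
  unfolding is_walk_def by (auto dest: in_set_dropD)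

lemma geo_min:
  assumes "length p = Suc (gdist V E (hd p) (last p))" "is_walk V E q" "hd q = hd p" "last q = last p"
  shows "length p \<le> length q"
proof -
  have q: "q \<noteq> []" using assms(2) by (simp add: is_walk_def)
  have "gdist V E (hd p) (last p) \<le> length q - 1"
    unfolding gdist_def
    by (rule Least_le) (use assms q in auto)
  then show ?thesis using assms(1) q by (cases q) auto
qed

lemma shortcut_E:
  assumes w: "is_walk V E p" and g: "length p = Suc (gdist V E (hd p) (last p))"
    and ij: "i + 1 < j" "j < length p"
  shows "\<not> E (p ! i) (p ! j)"
proof
  assume e: "E (p ! i) (p ! j)"
  let ?q = "take (i+1) p @ drop j p"
  have "last (take (i+1) p) = p ! i" using ij by (simp add: take_Suc_conv_app_nth)
  then have "is_walk V E ?q"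
    by (intro walk_append[OF walk_take[OF w] walk_drop[OF w]]) (use ij e in \<open>auto simp: last_conv_nth hd_drop_conv_nth min_def\<close>)
  moreover have "hd ?q = hd p" using ij by (cases p) auto
  moreover have "last ?q = last p" using ij by simp
  ultimately have "length p \<le> length ?q" using geo_min[OF g] by blast
  then show False using ij by simp
qed

lemma shortcut_eq:
  assumes w: "is_walk V E p" and g: "length p = Suc (gdist V E (hd p) (last p))"
    and ij: "i < j" "j < length p"
  shows "p ! i \<noteq> p ! j"
proof
  assume e: "p ! i = p ! j"
  let ?q = "take i p @ drop j p"
  have "is_walk V E ?q \<and> hd ?q = hd p"
  proof (cases i)
    case 0
    have "p \<noteq> []" using ij by auto
    then show ?thesis using walk_drop[OF w ij(2)] e ij 0 by (simp add: hd_drop_conv_nth hd_conv_nth)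
  next
    case (Suc i')
    have "E (p ! i') (p ! i)" using w ij Suc unfolding is_walk_def by auto
    moreover have "last (take i p) = p ! i'" using ij Suc by (simp add: take_Suc_conv_app_nth)
    ultimately have "is_walk V E ?q"
      by (intro walk_append[OF walk_take[OF w] walk_drop[OF w]]) (use ij e Suc in \<open>auto simp: last_conv_nth hd_drop_conv_nth min_def\<close>)
    moreover have "hd ?q = hd p" using ij Suc by (cases p) auto
    ultimately show ?thesis by blast
  qed
  moreover have "last ?q = last p" using ij by simp
  ultimately have "length p \<le> length ?q" using geo_min[OF g] by blast
  then show False using ij by simp
qed

theorem corollary4p3:
  fixes V :: "'a set" and E :: "'a \<Rightarrow> 'a \<Rightarrow> bool"
  assumes "simple_graph V E" and "graph_connected V E"
  shows "diam V E \<le> 3 \<longleftrightarrow>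
           (\<forall>S. independent_set V E S \<longrightarrow> general_position_set V E S)"
proof -
  have fin: "finite {gdist V E u v | u v. u \<in> V \<and> v \<in> V}"
    using assms(1) by (intro finite_image_set2) (auto simp: simple_graph_def)
  have ne: "{gdist V E u v | u v. u \<in> V \<and> v \<in> V} \<noteq> {}"
  proof -
    obtain x where "x \<in> V" using assms(1) by (auto simp: simple_graph_def)
    then show ?thesis by blast
  qed
  have diam_iff: "diam V E \<le> 3 \<longleftrightarrow> (\<forall>u\<in>V. \<forall>v\<in>V. gdist V E u v \<le> 3)"
    unfolding diam_def using Max_le_iff[OF fin ne] by blast
  have sym: "\<And>x y. E x y \<Longrightarrow> E y x" and irr: "\<And>x. \<not> E x x"
    using assms(1) by (auto simp: simple_graph_def)
  show ?thesis
  proof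
    assume d: "diam V E \<le> 3"
    show "\<forall>S. independent_set V E S \<longrightarrow> general_position_set V E S"
    proof (intro allI impI)
      fix S assume ind: "independent_set V E S"
      show "general_position_set V E S"
        unfolding general_position_set_def
      proof (intro conjI ballI impI notI)
        show "S \<subseteq> V" using ind by (simp add: independent_set_def)
        fix x y z assume xyz: "x \<in> S" "y \<in> S" "z \<in> S" "x \<noteq> y \<and> y \<noteq> z \<and> x \<noteq> z"
        assume "\<exists>p. is_geodesic V E p \<and> {x, y, z} \<subseteq> set p"
        then obtain p where g: "is_geodesic V E p" and sp: "{x, y, z} \<subseteq> set p" by blast
        have w: "is_walk V E p" and len: "length p = Suc (gdist V E (hd p) (last p))"
          using g by (auto simp: is_geodesic_def)
        have pne: "p \<noteq> []" using w by (simp add: is_walk_def)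
        have "hd p \<in> V" "last p \<in> V" using w pne by (auto simp: is_walk_def)
        then have "gdist V E (hd p) (last p) \<le> 3" using d diam_iff by blast
        then have l4: "length p \<le> 4" using len by simp
        obtain i where i: "i < length p" "p ! i = x" using sp by (auto simp: in_set_conv_nth)
        obtain j where j: "j < length p" "p ! j = y" using sp by (auto simp: in_set_conv_nth)
        obtain k where k: "k < length p" "p ! k = z" using sp by (auto simp: in_set_conv_nth)
        have nadj: "b \<noteq> Suc a" if "a \<in> {i,j,k}" "b \<in> {i,j,k}" for a b
        proof
          assume b: "b = Suc a"
          have "p ! a \<in> S" "p ! b \<in> S" using that i j k xyz by auto
          moreover have "E (p ! a) (p ! b)" using w b that i j k unfolding is_walk_def by auto
          ultimately show False using ind by (auto simp: independent_set_def)
        qed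
        have "i \<noteq> j" "j \<noteq> k" "i \<noteq> k" using i j k xyz by auto
        then show False using nadj[of i j] nadj[of j i] nadj[of i k] nadj[of k i]
            nadj[of j k] nadj[of k j] i j k l4 by auto
      qed
    qed
  next
    assume H: "\<forall>S. independent_set V E S \<longrightarrow> general_position_set V E S"
    show "diam V E \<le> 3"
      unfolding diam_iff
    proof (intro ballI, rule ccontr)
      fix u v assume uv: "u \<in> V" "v \<in> V" and nd: "\<not> gdist V E u v \<le> 3"
      have "\<exists>n p. is_walk V E p \<and> hd p = u \<and> last p = v \<and> length p = Suc n"
        using assms(2) uv unfolding graph_connected_def is_walk_def
        by (metis length_greater_0_conv Suc_pred)
      then have "\<exists>p. is_walk V E p \<and> hd p = u \<and> last p = v \<and> length p = Suc (gdist V E u v)"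
        unfolding gdist_def
        by (rule LeastI_ex[where P="\<lambda>n. \<exists>p. is_walk V E p \<and> hd p = u \<and> last p = v \<and> length p = Suc n"])
      then obtain p where w: "is_walk V E p" and hp: "hd p = u" and lp: "last p = v"
        and len: "length p = Suc (gdist V E u v)" by blast
      have g: "length p = Suc (gdist V E (hd p) (last p))" using len hp lp by simp
      have l5: "5 \<le> length p" using len nd by simp
      let ?S = "{p ! 0, p ! 2, p ! 4}"
      have sP: "?S \<subseteq> set p" using l5 by (auto intro!: nth_mem)
      have sV: "?S \<subseteq> V" using sP w unfolding is_walk_def by blast
      have n02: "\<not> E (p!0) (p!2)" and n24: "\<not> E (p!2) (p!4)" and n04: "\<not> E (p!0) (p!4)"
        using shortcut_E[OF w g] l5 by auto
      have "independent_set V E ?S"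
        unfolding independent_set_def using sV n02 n24 n04 sym irr by blast
      then have gp: "general_position_set V E ?S" using H by blast
      have d: "p!0 \<noteq> p!2" "p!2 \<noteq> p!4" "p!0 \<noteq> p!4"
        using shortcut_eq[OF w g] l5 by auto
      have geo: "is_geodesic V E p" using w g by (simp add: is_geodesic_def)
      show False using sP using gp d geo unfolding general_position_set_def by blast
    qed
  qed
qed

end
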